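(* Let $k\ge1$, $-\frac{\pi}{2}\le\theta_1<\theta_2<\dots<\theta_{k+1}\le\frac{\pi}{2}$ and $\theta_{\min}=\min_{p\ne j}|\theta_p-\theta_j|$. Then for any $\hat\theta_1,\dots,\hat\theta_k\in\mathbb R$, $$\|\eta_{k+1,k}(e^{i\theta_1},\dots,e^{i\theta_{k+1}},e^{i\hat\theta_1},\dots,e^{i\hat\theta_k})\|_\infty\ge\xi(k)\Big(\frac{2\theta_{\min}}{\pi}\Big)^k.$$
   Context: For $z_1,\dots,z_p,\hat z_1,\dots,\hat z_q\in\mathbb C$, $\eta_{p,q}(z_1,\dots,z_p,\hat z_1,\dots,\hat z_q)\in\mathbb R^p$ is the vector whose $j$-th entry is $\prod_{l=1}^q|z_j-\hat z_l|$. For an integer $k\ge1$: $\xi(1)=\frac12$; $\xi(k)=\frac{(\frac{k-1}{2})!(\frac{k-3}{2})!}{4}$ if $k\ge3$ is odd; $\xi(k)=\frac{((\frac{k-2}{2})!)^2}{4}$ if $k$ is even. *)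

theory Defs
  imports "HOL-Analysis.Analysis"
begin

text \<open>Vectors are represented as functions on 1-based indices. eta p q z zh j is the
  j-th entry (1 \<le> j \<le> p) of eta_{p,q}(z_1..z_p, zh_1..zh_q).\<close>
definition eta :: "nat \<Rightarrow> nat \<Rightarrow> (nat \<Rightarrow> complex) \<Rightarrow> (nat \<Rightarrow> complex) \<Rightarrow> nat \<Rightarrow> real" where
  "eta p q z zh j = (\<Prod>l\<in>{1..q}. cmod (z j - zh l))"

definition inf_norm :: "nat \<Rightarrow> (nat \<Rightarrow> real) \<Rightarrow> real" where
  "inf_norm p v = Max ((\<lambda>j. \<bar>v j\<bar>) ` {1..p})"

definition xi :: "nat \<Rightarrow> real" where
  "xi k = (if k = 1 then 1/2
           else if odd k then fact ((k - 1) div 2) * fact ((k - 3) div 2) / 4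
           else (fact ((k - 2) div 2))^2 / 4)"

definition theta_min :: "nat \<Rightarrow> (nat \<Rightarrow> real) \<Rightarrow> real" where
  "theta_min n \<theta> = Min {\<bar>\<theta> p - \<theta> j\<bar> | p j. p \<in> {1..n} \<and> j \<in> {1..n} \<and> p \<noteq> j}"

end

theory Submission
  imports Defs "HOL-Computational_Algebra.Polynomial"
begin


lemma lagrange_coeff:
  fixes x :: "nat \<Rightarrow> complex" and p :: "complex poly"
  assumes fin: "finite A" and cA: "card A = Suc n" and inj: "inj_on x A" and dp: "degree p \<le> n"
  shows "coeff p n = (\<Sum>j\<in>A. poly p (x j) / (\<Prod>m\<in>A-{j}. (x j - x m)))"
proof -
  define L where "L j = (\<Prod>m\<in>A-{j}. [:- x m, 1:])" for j
  define c where "c j = poly p (x j) / (\<Prod>m\<in>A-{j}. (x j - x m))" for j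
  define q where "q = (\<Sum>j\<in>A. smult (c j) (L j))"
  have degL: "degree (L j) = n" if "j \<in> A" for j
  proof -
    have "degree (L j) = (\<Sum>m\<in>A-{j}. degree [:- x m, 1:])"
      unfolding L_def by (rule degree_prod_eq_sum_degree) auto
    also have "\<dots> = card (A - {j})" by simp
    also have "\<dots> = n" using cA fin that by simp
    finally show ?thesis .
  qed
  have coeffL: "coeff (L j) n = 1" if "j \<in> A" for j
  proof -
    have "lead_coeff (L j) = 1" unfolding L_def lead_coeff_prod by simp
    thus ?thesis using degL[OF that] by simp
  qed
  have polyL: "poly (L j) y = (\<Prod>m\<in>A-{j}. (y - x m))" for j y
    by (simp add: L_def poly_prod)
  have L0: "poly (L j) (x i) = 0" if "i \<in> A" "j \<in> A" "j \<noteq> i" for i j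
    unfolding polyL using that fin by (intro prod_zero) auto
  have nz: "(\<Prod>m\<in>A-{j}. (x j - x m)) \<noteq> 0" if "j \<in> A" for j
    using inj that fin by (auto simp: inj_on_def)
  have pq: "poly p y = poly q y" if "y \<in> x ` A" for y
  proof -
    from that obtain i where i: "i \<in> A" "y = x i" by auto
    have "poly q (x i) = (\<Sum>j\<in>A. c j * poly (L j) (x i))"
      by (simp add: q_def poly_sum)
    also have "\<dots> = c i * poly (L i) (x i) + (\<Sum>j\<in>A-{i}. c j * poly (L j) (x i))"
      using fin i by (simp add: sum.remove)
    also have "(\<Sum>j\<in>A-{i}. c j * poly (L j) (x i)) = 0"
      using L0 i by (intro sum.neutral) auto
    also have "c i * poly (L i) (x i) = poly p (x i)"
      using nz[OF i(1)] by (simp add: c_def polyL)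
    finally show ?thesis using i by simp
  qed
  have dq: "degree q \<le> n"
    unfolding q_def by (rule degree_sum_le[OF fin]) (use degL degree_smult_le in fastforce)
  have cxA: "card (x ` A) = Suc n" using card_image[OF inj] cA by simp
  have "p = q" by (rule poly_eqI_degree[OF pq]) (use dp dq cxA in auto)
  hence "coeff p n = (\<Sum>j\<in>A. c j * coeff (L j) n)" by (simp add: q_def coeff_sum)
  also have "\<dots> = (\<Sum>j\<in>A. c j)" using coeffL by simp
  finally show ?thesis by (simp add: c_def)
qed


lemma jordan:
  fixes x :: real assumes "0 \<le> x" "x \<le> pi/2"
  shows "2/pi * x \<le> sin x"
proof -
  have cv: "convex_on {0..pi/2} (\<lambda>x. - sin x)"
  proof (rule convex_on_realI[where f'="\<lambda>x. - cos x"])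
    show "connected {0..pi/2::real}" by simp
    show "((\<lambda>x. - sin x) has_real_derivative - cos x) (at x)" for x :: real
      by (auto intro!: derivative_eq_intros)
    show "- cos x \<le> - cos y" if "x \<in> {0..pi/2}" "y \<in> {0..pi/2}" "x \<le> y" for x y :: real
      using that by (simp add: cos_monotone_0_pi_le)
  qed
  hence cc: "concave_on {0..pi/2} sin" by (simp add: convex_on_iff_concave)
  have "sin x \<ge> (sin (pi/2) - sin 0) / (pi/2 - 0) * (x - 0) + sin 0"
    using concave_onD_Icc'[OF cc, of x] assms by simp
  thus ?thesis by simp
qed

lemma cmod_cis_diff: "cmod (cis a - cis b) = 2 * \<bar>sin ((a - b)/2)\<bar>"
proof -
  have "(cmod (cis a - cis b))^2 = (cos a - cos b)^2 + (sin a - sin b)^2"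
    by (simp add: cmod_power2)
  also have "\<dots> = 2 - 2 * cos (a - b)"
    by (simp add: cos_diff power2_diff algebra_simps)
  also have "cos (a - b) = 1 - 2 * (sin ((a-b)/2))^2"
  proof -
    have e: "2 * ((a - b)/2) = a - b" by simp
    show ?thesis using cos_double_sin[of "(a-b)/2"] unfolding e .
  qed
  finally have "(cmod (cis a - cis b))^2 = (2 * \<bar>sin ((a - b)/2)\<bar>)^2"
    by (simp add: power_mult_distrib)
  thus ?thesis by (rule power2_eq_imp_eq) auto
qed

lemma chord:
  assumes "\<bar>a - b\<bar> \<le> pi"
  shows "2/pi * \<bar>a - b\<bar> \<le> cmod (cis a - cis b)"
proof -
  have "cmod (cis a - cis b) = cmod (cis b - cis a)" by (simp add: norm_minus_commute)
  hence e: "cmod (cis a - cis b) = 2 * sin (\<bar>a - b\<bar>/2)"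
  proof (cases "a \<ge> b")
    case True thus ?thesis using cmod_cis_diff[of a b] assms
      by (simp add: sin_ge_zero)
  next
    case False thus ?thesis using cmod_cis_diff[of b a] assms
      by (simp add: sin_ge_zero norm_minus_commute)
  qed
  have "2/pi * (\<bar>a - b\<bar>/2) \<le> sin (\<bar>a - b\<bar>/2)" using assms by (intro jordan) auto
  thus ?thesis unfolding e by simp
qed

lemma prod_dist_fact:
  assumes "j \<in> {1..n}"
  shows "(\<Prod>m\<in>{1..n}-{j}. \<bar>real j - real m\<bar>) = fact (j-1) * fact (n-j)"
proof -
  have split: "{1..n}-{j} = {1..<j} \<union> {j<..n}" using assms by auto
  have a: "(\<Prod>m\<in>{1..<j}. \<bar>real j - real m\<bar>) = fact (j-1)"
  proof -
    have "(\<Prod>m\<in>{1..<j}. \<bar>real j - real m\<bar>) = (\<Prod>i\<in>{1..j-1}. real i)"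
      by (rule prod.reindex_bij_witness[where i="\<lambda>i. j - i" and j="\<lambda>m. j - m"]) (auto simp: of_nat_diff)
    also have "\<dots> = fact (j-1)" by (simp add: fact_prod)
    finally show ?thesis .
  qed
  have b: "(\<Prod>m\<in>{j<..n}. \<bar>real j - real m\<bar>) = fact (n-j)"
  proof -
    have "(\<Prod>m\<in>{j<..n}. \<bar>real j - real m\<bar>) = (\<Prod>i\<in>{1..n-j}. real i)"
      by (rule prod.reindex_bij_witness[where i="\<lambda>i. i + j" and j="\<lambda>m. m - j"]) (auto simp: of_nat_diff)
    also have "\<dots> = fact (n-j)" by (simp add: fact_prod)
    finally show ?thesis .
  qed
  have "(\<Prod>m\<in>{1..n}-{j}. \<bar>real j - real m\<bar>) = (\<Prod>m\<in>{1..<j}. \<bar>real j - real m\<bar>) * (\<Prod>m\<in>{j<..n}. \<bar>real j - real m\<bar>)"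
    unfolding split by (rule prod.union_disjoint) auto
  thus ?thesis by (simp only: a b)
qed

lemma sum_inv_fact:
  "(\<Sum>j\<in>{1..k+1}. 1 / (fact (j-1) * fact (k+1-j)) :: real) = 2^k / fact k"
proof -
  have "(\<Sum>j\<in>{1..k+1}. 1 / (fact (j-1) * fact (k+1-j)) :: real)
      = (\<Sum>i\<le>k. 1 / (fact i * fact (k-i)))"
    by (rule sum.reindex_bij_witness[where i="\<lambda>i. i + 1" and j="\<lambda>j. j - 1"]) auto
  also have "\<dots> = (\<Sum>i\<le>k. real (k choose i) / fact k)"
    by (rule sum.cong) (auto simp: binomial_fact)
  also have "\<dots> = real (\<Sum>i\<le>k. k choose i) / fact k"
    by (simp add: sum_divide_distrib)
  also have "\<dots> = 2^k / fact k" by (simp add: choose_row_sum)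
  finally show ?thesis .
qed

lemma xi_even: "(fact m :: real)^2 / 4 \<le> fact (2*m+2) / 2^(2*m+2)"
proof (induction m)
  case 0 thus ?case by simp
next
  case (Suc m)
  have g: "(fact (Suc m)::real) = (real m+1)*fact m" by simp
  have f1: "(fact (Suc m) :: real)^2 = (real m+1)^2 * (fact m)^2" unfolding g by (rule power_mult_distrib)
  have f2: "(fact (2*Suc m+2) :: real) = (2*real m+4)*(2*real m+3) * fact (2*m+2)"
  proof -
    have e: "2*Suc m+2 = Suc (Suc (2*m+2))" by simp
    show ?thesis unfolding e fact_Suc by (simp add: algebra_simps del: fact_Suc)
  qed
  have f3: "(2::real)^(2*Suc m+2) = 4 * 2^(2*m+2)" by simp
  have pos: "(0::real) \<le> fact (2*m+2) / 2^(2*m+2)" by simp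
  have "(fact (Suc m) :: real)^2 / 4 = (real m+1)^2 * ((fact m)^2/4)" using f1 by simp
  also have "\<dots> \<le> (real m+1)^2 * (fact (2*m+2) / 2^(2*m+2))"
    using Suc.IH by (intro mult_left_mono) auto
  also have "\<dots> \<le> ((2*real m+4)*(2*real m+3)/4) * (fact (2*m+2) / 2^(2*m+2))"
    by (intro mult_right_mono[OF _ pos]) (simp add: power2_eq_square algebra_simps)
  also have "\<dots> = fact (2*Suc m+2) / 2^(2*Suc m+2)"
    unfolding f2 f3 by simp
  finally show ?case .
qed

lemma xi_odd: "(fact (m+1) * fact m :: real) / 4 \<le> fact (2*m+3) / 2^(2*m+3)"
proof (induction m)
  case 0 thus ?case by (simp add: fact_numeral)
next
  case (Suc m)
  have f1: "(fact (Suc m + 1) * fact (Suc m) :: real) = ((real m+2)*(real m+1)) * (fact (m+1) * fact m)"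
    by (simp add: algebra_simps)
  have f2: "(fact (2*Suc m+3) :: real) = (2*real m+5)*(2*real m+4) * fact (2*m+3)"
  proof -
    have e: "2*Suc m+3 = Suc (Suc (2*m+3))" by simp
    show ?thesis unfolding e fact_Suc by (simp add: algebra_simps del: fact_Suc)
  qed
  have f3: "(2::real)^(2*Suc m+3) = 4 * 2^(2*m+3)"
  proof -
    have e: "2*Suc m+3 = 2 + (2*m+3)" by simp
    show ?thesis unfolding e power_add by simp
  qed
  have pos: "(0::real) \<le> fact (2*m+3) / 2^(2*m+3)" by simp
  have "(fact (Suc m + 1) * fact (Suc m) :: real) / 4 = ((real m+2)*(real m+1)) * ((fact (m+1) * fact m)/4)"
    using f1 by simp
  also have "\<dots> \<le> ((real m+2)*(real m+1)) * (fact (2*m+3) / 2^(2*m+3))"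
    using Suc.IH by (intro mult_left_mono) auto
  also have "\<dots> \<le> ((2*real m+5)*(2*real m+4)/4) * (fact (2*m+3) / 2^(2*m+3))"
    by (intro mult_right_mono[OF _ pos]) (simp add: algebra_simps)
  also have "\<dots> = fact (2*Suc m+3) / 2^(2*Suc m+3)"
    unfolding f2 f3 by simp
  finally show ?case .
qed

lemma xi_le: assumes "k \<ge> 1" shows "xi k \<le> fact k / 2^k"
proof (cases "k = 1")
  case True thus ?thesis by (simp add: xi_def)
next
  case F: False
  show ?thesis
  proof (cases "even k")
    case True
    define m where "m = k div 2 - 1"
    have k: "k = 2*m+2" using True F assms unfolding m_def by presburger
    have "xi k = (fact m)^2/4" using k by (simp add: xi_def)
    also have "\<dots> \<le> fact (2*m+2) / 2^(2*m+2)" by (rule xi_even)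
    also have "\<dots> = fact k / 2^k" by (simp only: k)
    finally show ?thesis .
  next
    case False
    define m where "m = k div 2 - 1"
    have k: "k = 2*m+3" using False F assms unfolding m_def by presburger
    have "(k - 1) div 2 = m+1" "(k-3) div 2 = m" using k by auto
    hence "xi k = fact (m+1) * fact m / 4" using k False F by (simp add: xi_def)
    also have "\<dots> \<le> fact (2*m+3) / 2^(2*m+3)" by (rule xi_odd)
    also have "\<dots> = fact k / 2^k" by (simp only: k)
    finally show ?thesis .
  qed
qed



theorem corollary3p1:
  fixes k :: nat and \<theta> \<theta>h :: "nat \<Rightarrow> real"
  assumes "k \<ge> 1"
    and "\<And>j. j \<in> {1..k+1} \<Longrightarrow> - (pi/2) \<le> \<theta> j \<and> \<theta> j \<le> pi/2"
    and "\<And>j. j \<in> {1..k} \<Longrightarrow> \<theta> j < \<theta> (j+1)"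
  shows "inf_norm (k+1) (eta (k+1) k (\<lambda>j. cis (\<theta> j)) (\<lambda>l. cis (\<theta>h l)))
           \<ge> xi k * (2 * theta_min (k+1) \<theta> / pi) ^ k"
proof -
  define A where "A = {1..k+1}"
  define z where "z j = cis (\<theta> j)" for j
  define \<delta> where "\<delta> = theta_min (k+1) \<theta>"
  define S where "S = {\<bar>\<theta> p - \<theta> j\<bar> | p j. p \<in> {1..k+1} \<and> j \<in> {1..k+1} \<and> p \<noteq> j}"
  have finA: "finite A" by (simp add: A_def)
  have Sfin: "finite S"
  proof (rule finite_subset)
    show "S \<subseteq> (\<lambda>(p,j). \<bar>\<theta> p - \<theta> j\<bar>) ` ({1..k+1}\<times>{1..k+1})" unfolding S_def by auto
  qed auto
  have mono0: "\<theta> i < \<theta> (i + d + 1)" if "1 \<le> i" "i + d + 1 \<le> k+1" for i d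
    using that
  proof (induction d)
    case 0 thus ?case using assms(3)[of i] by simp
  next
    case (Suc d)
    hence "\<theta> i < \<theta> (i + d + 1)" by simp
    also have "\<dots> < \<theta> (i + d + 1 + 1)" using assms(3)[of "i+d+1"] Suc.prems by simp
    finally show ?case by simp
  qed
  have mono: "\<theta> i < \<theta> j" if "1 \<le> i" "i < j" "j \<le> k+1" for i j
    using mono0[of i "j - i - 1"] that by simp
  have Spos: "x > 0" if "x \<in> S" for x
  proof -
    from that obtain p j where pj: "x = \<bar>\<theta> p - \<theta> j\<bar>" "p \<in> {1..k+1}" "j \<in> {1..k+1}" "p \<noteq> j"
      unfolding S_def by blast
    show ?thesis
    proof (cases "p < j")
      case True thus ?thesis using mono[of p j] pj by auto
    next
      case False thus ?thesis using mono[of j p] pj by auto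
    qed
  qed
  have Sne: "\<bar>\<theta> 2 - \<theta> 1\<bar> \<in> S" unfolding S_def using assms(1)
    by (intro CollectI exI[of _ 2] exI[of _ 1]) auto
  have \<delta>S: "\<delta> = Min S" unfolding \<delta>_def theta_min_def S_def by simp
  have \<delta>pos: "\<delta> > 0" unfolding \<delta>S using Min_in[OF Sfin] Sne Spos by blast
  have gap: "\<delta> \<le> \<theta> (j+1) - \<theta> j" if "j \<in> {1..k}" for j
  proof -
    have "\<bar>\<theta> (j+1) - \<theta> j\<bar> \<in> S" unfolding S_def using that
      by (intro CollectI exI[of _ "j+1"] exI[of _ j]) auto
    hence "\<delta> \<le> \<bar>\<theta> (j+1) - \<theta> j\<bar>" unfolding \<delta>S using Sfin by simp
    thus ?thesis using assms(3)[OF that] by simp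
  qed
  have dist0: "real d * \<delta> \<le> \<theta> (i + d) - \<theta> i" if "1 \<le> i" "i + d \<le> k+1" for i d
    using that
  proof (induction d)
    case 0 thus ?case by simp
  next
    case (Suc d)
    hence "real d * \<delta> \<le> \<theta> (i + d) - \<theta> i" by simp
    moreover have "\<delta> \<le> \<theta> (i + d + 1) - \<theta> (i + d)" using gap[of "i+d"] Suc.prems by simp
    ultimately show ?case by (simp add: algebra_simps)
  qed
  have dist: "\<bar>real i - real j\<bar> * \<delta> \<le> \<bar>\<theta> i - \<theta> j\<bar>" if "i \<in> A" "j \<in> A" for i j
  proof (cases "i \<le> j")
    case True
    have "real (j - i) * \<delta> \<le> \<theta> (i + (j - i)) - \<theta> i" using that True by (intro dist0) (auto simp: A_def)
    thus ?thesis using True by (simp add: of_nat_diff)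
  next
    case False
    have "real (i - j) * \<delta> \<le> \<theta> (j + (i - j)) - \<theta> j" using that False by (intro dist0) (auto simp: A_def)
    thus ?thesis using False by (simp add: of_nat_diff)
  qed
  define c where "c = 2 * \<delta> / pi"
  have cpos: "c > 0" unfolding c_def using \<delta>pos by simp
  have chordb: "c * \<bar>real i - real j\<bar> \<le> cmod (z i - z j)" if "i \<in> A" "j \<in> A" for i j
  proof -
    have "\<bar>\<theta> i - \<theta> j\<bar> \<le> pi" using assms(2)[of i] assms(2)[of j] that by (auto simp: A_def)
    hence "2/pi * \<bar>\<theta> i - \<theta> j\<bar> \<le> cmod (z i - z j)" unfolding z_def by (rule chord)
    moreover have "2/pi * (\<bar>real i - real j\<bar> * \<delta>) \<le> 2/pi * \<bar>\<theta> i - \<theta> j\<bar>"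
      using dist[OF that] by (intro mult_left_mono) auto
    ultimately show ?thesis unfolding c_def by (simp add: algebra_simps)
  qed
  have inj: "inj_on z A"
  proof (rule inj_onI)
    fix i j assume ij: "i \<in> A" "j \<in> A" "z i = z j"
    have "c * \<bar>real i - real j\<bar> \<le> 0" using chordb[OF ij(1,2)] ij(3) by simp
    thus "i = j" using cpos by (simp add: mult_le_0_iff)
  qed
  define p where "p = (\<Prod>l\<in>{1..k}. [:- cis (\<theta>h l), 1:])"
  have degp: "degree p = k"
  proof -
    have "degree p = (\<Sum>l\<in>{1..k}. degree [:- cis (\<theta>h l), 1:])"
      unfolding p_def by (rule degree_prod_eq_sum_degree) auto
    thus ?thesis by simp
  qed
  have coeffp: "coeff p k = 1"
  proof -
    have "lead_coeff p = 1" unfolding p_def lead_coeff_prod by simp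
    thus ?thesis using degp by simp
  qed
  have cardA: "card A = Suc k" by (simp add: A_def)
  have lag: "coeff p k = (\<Sum>j\<in>A. poly p (z j) / (\<Prod>m\<in>A-{j}. (z j - z m)))"
    by (rule lagrange_coeff[OF finA cardA inj]) (simp add: degp)
  define E where "E = eta (k+1) k (\<lambda>j. cis (\<theta> j)) (\<lambda>l. cis (\<theta>h l))"
  define M where "M = inf_norm (k+1) E"
  have polyabs: "cmod (poly p (z j)) = E j" for j
    by (simp add: p_def poly_prod prod_norm E_def eta_def z_def)
  have EM: "E j \<le> M" if "j \<in> A" for j
  proof -
    have "\<bar>E j\<bar> \<le> M" unfolding M_def inf_norm_def using that by (intro Max_ge) (auto simp: A_def)
    thus ?thesis by simp
  qed
  have E0: "0 \<le> E j" for j using polyabs[of j] by (metis norm_ge_zero)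
  have M0: "0 \<le> M" using EM[of 1] E0[of 1] by (auto simp: A_def)
  have wbound: "c^k * (fact (j-1) * fact (k+1-j)) \<le> cmod (\<Prod>m\<in>A-{j}. (z j - z m))" if j: "j \<in> A" for j
  proof -
    have "c^k * (fact (j-1) * fact (k+1-j)) = (\<Prod>m\<in>A-{j}. c * \<bar>real j - real m\<bar>)"
      using prod_dist_fact[of j "k+1"] j finA cardA
      by (simp add: prod.distrib A_def)
    also have "\<dots> \<le> (\<Prod>m\<in>A-{j}. cmod (z j - z m))"
      using chordb j cpos by (intro prod_mono) auto
    also have "\<dots> = cmod (\<Prod>m\<in>A-{j}. (z j - z m))" by (simp add: prod_norm)
    finally show ?thesis .
  qed
  have fpos: "0 < c^k * (fact (j-1) * fact (k+1-j))" for j using cpos by simp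
  have "1 = cmod (\<Sum>j\<in>A. poly p (z j) / (\<Prod>m\<in>A-{j}. (z j - z m)))"
    using lag coeffp by simp
  also have "\<dots> \<le> (\<Sum>j\<in>A. cmod (poly p (z j) / (\<Prod>m\<in>A-{j}. (z j - z m))))"
    by (rule norm_sum)
  also have "\<dots> = (\<Sum>j\<in>A. E j / cmod (\<Prod>m\<in>A-{j}. (z j - z m)))"
    by (simp add: norm_divide polyabs)
  also have "\<dots> \<le> (\<Sum>j\<in>A. M / (c^k * (fact (j-1) * fact (k+1-j))))"
  proof (rule sum_mono)
    fix j assume j: "j \<in> A"
    show "E j / cmod (\<Prod>m\<in>A-{j}. (z j - z m)) \<le> M / (c^k * (fact (j-1) * fact (k+1-j)))"
      using EM[OF j] wbound[OF j] fpos[of j] M0 E0[of j]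
      by (intro frac_le) auto
  qed
  also have "\<dots> = M / c^k * (\<Sum>j\<in>A. 1 / (fact (j-1) * fact (k+1-j)))"
    by (simp add: sum_distrib_left)
  also have "\<dots> = M / c^k * (2^k / fact k)"
    unfolding A_def by (simp only: sum_inv_fact)
  finally have one: "1 \<le> M / c^k * (2^k / fact k)" .
  have key: "fact k / 2^k * c^k \<le> M"
  proof -
    have "fact k / 2^k * c^k * 1 \<le> fact k / 2^k * c^k * (M / c^k * (2^k / fact k))"
      using one cpos by (intro mult_left_mono) auto
    also have "\<dots> = M" using cpos by (simp add: field_simps)
    finally show ?thesis by simp
  qed
  have "xi k * c^k \<le> fact k / 2^k * c^k"
    using xi_le[OF assms(1)] cpos by (intro mult_right_mono) auto
  also note key
  finally show ?thesis unfolding M_def E_def c_def \<delta>_def .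
qed
end
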